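(* Let $(Y,\cdot)$ be a strong order-preserving partial action of a monoid $T$ on a semilattice $Y$. Then there is a globalisation $(\kappa,\mathcal{X},\bullet)$ of $(Y,\cdot)$ such that $\mathcal{X}$ is a semilattice with identity, $\kappa:Y\to\mathcal{X}$ is an (injective) semilattice morphism, and $(\mathcal{X},\bullet)$ is an order-preserving action of $T$.
   Context: A semilattice is a commutative semigroup of idempotents, viewed as a poset via $e\le f$ iff $ef=e$. A partial action of a monoid $T$ on a set $X$ is a partial map $T\times X\to X$, $(t,x)\mapsto t\cdot x$, such that $1\cdot x$ is defined and equals $x$, and whenever $t\cdot x$ and $s\cdot(t\cdot x)$ are defined, $st\cdot x$ is defined and equals $s\cdot(t\cdot x)$. It is an action if always defined; strong if whenever $t\cdot x$ and $st\cdot x$ are defined then $s\cdot(t\cdot x)$ is defined; order-preserving (on a poset) if whenever $x\le y$ and $t\cdot y$ is defined then $t\cdot x$ is defined and $t\cdot x\le t\cdot y$. A globalisation of $(X,\cdot)$ is a triple $(\iota,\mathbf{X},\ast)$ with $\iota:X\to\mathbf{X}$ injective and $(\mathbf{X},\ast)$ an action of $T$ such that $t\cdot x$ is defined iff $t\ast x\iota\in X\iota$, and then $(t\cdot x)\iota=t\ast x\iota$. *)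

theory Defs
  imports Main
begin

definition semilattice_on :: "'a set \<Rightarrow> ('a \<Rightarrow> 'a \<Rightarrow> 'a) \<Rightarrow> bool" where
  "semilattice_on Y m \<longleftrightarrow>
     (\<forall>x\<in>Y. \<forall>y\<in>Y. m x y \<in> Y) \<and>
     (\<forall>x\<in>Y. \<forall>y\<in>Y. \<forall>z\<in>Y. m (m x y) z = m x (m y z)) \<and>
     (\<forall>x\<in>Y. \<forall>y\<in>Y. m x y = m y x) \<and>
     (\<forall>x\<in>Y. m x x = x)"

definition sl_le :: "('a \<Rightarrow> 'a \<Rightarrow> 'a) \<Rightarrow> 'a \<Rightarrow> 'a \<Rightarrow> bool" where
  "sl_le m e f \<longleftrightarrow> m e f = e"

definition semilattice_with_identity :: "'a set \<Rightarrow> ('a \<Rightarrow> 'a \<Rightarrow> 'a) \<Rightarrow> bool" where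
  "semilattice_with_identity X m \<longleftrightarrow>
     semilattice_on X m \<and> (\<exists>e\<in>X. \<forall>x\<in>X. m e x = x \<and> m x e = x)"

definition semilattice_morphism ::
  "'a set \<Rightarrow> ('a \<Rightarrow> 'a \<Rightarrow> 'a) \<Rightarrow> 'b set \<Rightarrow> ('b \<Rightarrow> 'b \<Rightarrow> 'b) \<Rightarrow> ('a \<Rightarrow> 'b) \<Rightarrow> bool" where
  "semilattice_morphism Y m X n f \<longleftrightarrow>
     (\<forall>x\<in>Y. f x \<in> X) \<and> (\<forall>x\<in>Y. \<forall>y\<in>Y. f (m x y) = n (f x) (f y))"

(* Partial action of the monoid 't on the set Y: act t x = Some (t\<cdot>x) when defined, None otherwise *)
definition partial_action :: "'a set \<Rightarrow> ('t::monoid_mult \<Rightarrow> 'a \<Rightarrow> 'a option) \<Rightarrow> bool" where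
  "partial_action Y act \<longleftrightarrow>
     (\<forall>t. \<forall>x\<in>Y. \<forall>y. act t x = Some y \<longrightarrow> y \<in> Y) \<and>
     (\<forall>x\<in>Y. act 1 x = Some x) \<and>
     (\<forall>s t. \<forall>x\<in>Y. \<forall>y z. act t x = Some y \<and> act s y = Some z \<longrightarrow> act (s * t) x = Some z)"

definition strong_partial_action :: "'a set \<Rightarrow> ('t::monoid_mult \<Rightarrow> 'a \<Rightarrow> 'a option) \<Rightarrow> bool" where
  "strong_partial_action Y act \<longleftrightarrow>
     partial_action Y act \<and>
     (\<forall>s t. \<forall>x\<in>Y. \<forall>y. act t x = Some y \<and> act (s * t) x \<noteq> None \<longrightarrow> act s y \<noteq> None)"

definition order_preserving_partial_action ::
  "'a set \<Rightarrow> ('a \<Rightarrow> 'a \<Rightarrow> 'a) \<Rightarrow> ('t::monoid_mult \<Rightarrow> 'a \<Rightarrow> 'a option) \<Rightarrow> bool" where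
  "order_preserving_partial_action Y m act \<longleftrightarrow>
     partial_action Y act \<and>
     (\<forall>t. \<forall>x\<in>Y. \<forall>y\<in>Y. \<forall>y'. sl_le m x y \<and> act t y = Some y' \<longrightarrow>
        (\<exists>x'. act t x = Some x' \<and> sl_le m x' y'))"

definition monoid_action :: "'x set \<Rightarrow> ('t::monoid_mult \<Rightarrow> 'x \<Rightarrow> 'x) \<Rightarrow> bool" where
  "monoid_action X act \<longleftrightarrow>
     (\<forall>t. \<forall>x\<in>X. act t x \<in> X) \<and>
     (\<forall>x\<in>X. act 1 x = x) \<and>
     (\<forall>s t. \<forall>x\<in>X. act (s * t) x = act s (act t x))"

definition order_preserving_action ::
  "'x set \<Rightarrow> ('x \<Rightarrow> 'x \<Rightarrow> 'x) \<Rightarrow> ('t::monoid_mult \<Rightarrow> 'x \<Rightarrow> 'x) \<Rightarrow> bool" where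
  "order_preserving_action X n act \<longleftrightarrow>
     monoid_action X act \<and>
     (\<forall>t. \<forall>x\<in>X. \<forall>y\<in>X. sl_le n x y \<longrightarrow> sl_le n (act t x) (act t y))"

definition globalisation ::
  "'a set \<Rightarrow> ('t::monoid_mult \<Rightarrow> 'a \<Rightarrow> 'a option) \<Rightarrow> ('a \<Rightarrow> 'x) \<Rightarrow> 'x set \<Rightarrow> ('t \<Rightarrow> 'x \<Rightarrow> 'x) \<Rightarrow> bool" where
  "globalisation Y act \<iota> X gact \<longleftrightarrow>
     inj_on \<iota> Y \<and> \<iota> ` Y \<subseteq> X \<and> monoid_action X gact \<and>
     (\<forall>t. \<forall>x\<in>Y. (act t x \<noteq> None \<longleftrightarrow> gact t (\<iota> x) \<in> \<iota> ` Y) \<and>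
                 (\<forall>y. act t x = Some y \<longrightarrow> \<iota> y = gact t (\<iota> x)))"

end

theory Submission
  imports Defs
begin

definition Fp :: "('t::monoid_mult \<Rightarrow> 'a \<Rightarrow> 'a option) \<Rightarrow> 't \<Rightarrow> 'a \<Rightarrow> ('t \<times> 'a) set" where
  "Fp act r w = {(s,z). act (s*r) w = Some z}"

definition UU :: "'a set \<Rightarrow> ('t::monoid_mult \<Rightarrow> 'a \<Rightarrow> 'a option) \<Rightarrow> ('t \<times> 'a) set set" where
  "UU Y act = {Fp act r w | r w. w \<in> Y}"

definition lef :: "('a \<Rightarrow> 'a \<Rightarrow> 'a) \<Rightarrow> ('t \<times> 'a) set \<Rightarrow> ('t \<times> 'a) set \<Rightarrow> bool" where
  "lef m A B \<longleftrightarrow> (\<forall>s z. (s,z) \<in> B \<longrightarrow> (\<exists>z'. (s,z') \<in> A \<and> m z' z = z'))"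

definition sh :: "'t::monoid_mult \<Rightarrow> ('t \<times> 'a) set \<Rightarrow> ('t \<times> 'a) set" where
  "sh t A = {(s,z). (s*t,z) \<in> A}"

definition XX :: "'a set \<Rightarrow> ('t::monoid_mult \<Rightarrow> 'a \<Rightarrow> 'a option) \<Rightarrow> ('a \<Rightarrow> 'a \<Rightarrow> 'a) \<Rightarrow> ('t \<times> 'a) set set set" where
  "XX Y act m = {D. D \<subseteq> UU Y act \<and> (\<forall>G\<in>D. \<forall>G'\<in>UU Y act. lef m G' G \<longrightarrow> G' \<in> D)}"

definition kap :: "'a set \<Rightarrow> ('t::monoid_mult \<Rightarrow> 'a \<Rightarrow> 'a option) \<Rightarrow> ('a \<Rightarrow> 'a \<Rightarrow> 'a) \<Rightarrow> 'a \<Rightarrow> ('t \<times> 'a) set set" where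
  "kap Y act m y = {G \<in> UU Y act. lef m G (Fp act 1 y)}"

definition gac :: "'a set \<Rightarrow> ('t::monoid_mult \<Rightarrow> 'a \<Rightarrow> 'a option) \<Rightarrow> ('a \<Rightarrow> 'a \<Rightarrow> 'a) \<Rightarrow> 't \<Rightarrow> ('t \<times> 'a) set set \<Rightarrow> ('t \<times> 'a) set set" where
  "gac Y act m t D = {G \<in> UU Y act. \<exists>H\<in>D. lef m G (sh t H)}"

context
  fixes Y :: "'a set" and m :: "'a \<Rightarrow> 'a \<Rightarrow> 'a"
    and act :: "'t::monoid_mult \<Rightarrow> 'a \<Rightarrow> 'a option"
  assumes SL: "semilattice_on Y m"
    and ST: "strong_partial_action Y act"
    and OP: "order_preserving_partial_action Y m act"
begin

lemma cl: "x \<in> Y \<Longrightarrow> y \<in> Y \<Longrightarrow> m x y \<in> Y" using SL unfolding semilattice_on_def by blast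
lemma asc: "x \<in> Y \<Longrightarrow> y \<in> Y \<Longrightarrow> z \<in> Y \<Longrightarrow> m (m x y) z = m x (m y z)" using SL unfolding semilattice_on_def by blast
lemma cm: "x \<in> Y \<Longrightarrow> y \<in> Y \<Longrightarrow> m x y = m y x" using SL unfolding semilattice_on_def by blast
lemma idm: "x \<in> Y \<Longrightarrow> m x x = x" using SL unfolding semilattice_on_def by blast

lemma pa1: "x \<in> Y \<Longrightarrow> act t x = Some y \<Longrightarrow> y \<in> Y"
  using ST unfolding strong_partial_action_def partial_action_def by blast
lemma pa2: "x \<in> Y \<Longrightarrow> act 1 x = Some x"
  using ST unfolding strong_partial_action_def partial_action_def by blast
lemma pa3: "x \<in> Y \<Longrightarrow> act t x = Some y \<Longrightarrow> act s y = Some z \<Longrightarrow> act (s*t) x = Some z"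
  using ST unfolding strong_partial_action_def partial_action_def by blast
lemma st: "x \<in> Y \<Longrightarrow> act t x = Some y \<Longrightarrow> act (s*t) x \<noteq> None \<Longrightarrow> act s y \<noteq> None"
  using ST unfolding strong_partial_action_def by blast
lemma op: "x \<in> Y \<Longrightarrow> y \<in> Y \<Longrightarrow> m x y = x \<Longrightarrow> act t y = Some y' \<Longrightarrow> \<exists>x'. act t x = Some x' \<and> m x' y' = x'"
  using OP unfolding order_preserving_partial_action_def sl_le_def by blast

lemma le_trans_Y: "a \<in> Y \<Longrightarrow> b \<in> Y \<Longrightarrow> c \<in> Y \<Longrightarrow> m a b = a \<Longrightarrow> m b c = b \<Longrightarrow> m a c = a"
  by (metis asc)
lemma le_antisym_Y: "a \<in> Y \<Longrightarrow> b \<in> Y \<Longrightarrow> m a b = a \<Longrightarrow> m b a = b \<Longrightarrow> a = b"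
  by (metis cm)

lemma L1: "w \<in> Y \<Longrightarrow> act r w = Some w' \<Longrightarrow> Fp act r w = Fp act 1 w'"
proof -
  assume w: "w \<in> Y" and a: "act r w = Some w'"
  have "act (s*r) w = act s w'" for s
  proof (cases "act s w'")
    case None
    then show ?thesis using st[OF w a, of s] by metis
  next
    case (Some z)
    then show ?thesis using pa3[OF w a Some] by simp
  qed
  then show ?thesis unfolding Fp_def by simp
qed

lemma Fp_mem: "w \<in> Y \<Longrightarrow> (s,z) \<in> Fp act r w \<Longrightarrow> z \<in> Y"
  unfolding Fp_def using pa1 by auto

lemma Fp_fun: "(s,z) \<in> Fp act r w \<Longrightarrow> (s,z') \<in> Fp act r w \<Longrightarrow> z = z'"
  unfolding Fp_def by auto

lemma U_mem: "G \<in> UU Y act \<Longrightarrow> (s,z) \<in> G \<Longrightarrow> z \<in> Y"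
  unfolding UU_def using Fp_mem by blast
lemma U_fun: "G \<in> UU Y act \<Longrightarrow> (s,z) \<in> G \<Longrightarrow> (s,z') \<in> G \<Longrightarrow> z = z'"
  unfolding UU_def using Fp_fun by blast

lemma le_refl: "G \<in> UU Y act \<Longrightarrow> lef m G G"
  unfolding lef_def using U_mem idm by blast

lemma le_trans: "A \<in> UU Y act \<Longrightarrow> B \<in> UU Y act \<Longrightarrow> C \<in> UU Y act \<Longrightarrow> lef m A B \<Longrightarrow> lef m B C \<Longrightarrow> lef m A C"
  unfolding lef_def by (meson U_mem le_trans_Y)

lemma le_antisym: "A \<in> UU Y act \<Longrightarrow> B \<in> UU Y act \<Longrightarrow> lef m A B \<Longrightarrow> lef m B A \<Longrightarrow> A = B"
proof -
  assume A: "A \<in> UU Y act" and B: "B \<in> UU Y act" and ab: "lef m A B" and ba: "lef m B A"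
  have "(s,z) \<in> A \<Longrightarrow> (s,z) \<in> B" for s z
  proof -
    assume z: "(s,z) \<in> A"
    then obtain z' where z': "(s,z') \<in> B" "m z' z = z'" using ba unfolding lef_def by blast
    then obtain z'' where z'': "(s,z'') \<in> A" "m z'' z' = z''" using ab unfolding lef_def by blast
    have "z'' = z" using U_fun[OF A z'' (1) z] .
    then have "z = z'" using le_antisym_Y U_mem A B z z' z'' by metis
    then show ?thesis using z' by simp
  qed
  moreover have "(s,z) \<in> B \<Longrightarrow> (s,z) \<in> A" for s z
  proof -
    assume z: "(s,z) \<in> B"
    then obtain z' where z': "(s,z') \<in> A" "m z' z = z'" using ab unfolding lef_def by blast
    then obtain z'' where z'': "(s,z'') \<in> B" "m z'' z' = z''" using ba unfolding lef_def by blast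
    have "z'' = z" using U_fun[OF B z'' (1) z] .
    then have "z = z'" using le_antisym_Y U_mem A B z z' z'' by metis
    then show ?thesis using z' by simp
  qed
  ultimately show ?thesis by auto
qed

lemma sh_mono: "lef m G H \<Longrightarrow> lef m (sh t G) (sh t H)"
  unfolding lef_def sh_def by auto

lemma sh_Fp: "sh t (Fp act r w) = Fp act (t*r) w"
  unfolding sh_def Fp_def by (simp add: mult.assoc)

lemma sh_U: "H \<in> UU Y act \<Longrightarrow> sh t H \<in> UU Y act"
  unfolding UU_def using sh_Fp by blast

lemma sh_comp: "sh (s*t) A = sh s (sh t A)"
  unfolding sh_def by (simp add: mult.assoc)

lemma sh_one: "sh 1 A = A"
  unfolding sh_def by simp

lemma Fp1_U: "y \<in> Y \<Longrightarrow> Fp act r y \<in> UU Y act"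
  unfolding UU_def by blast

lemma Fp1_in: "y \<in> Y \<Longrightarrow> (1, y) \<in> Fp act 1 y"
  unfolding Fp_def using pa2 by simp

lemma Fp_inj: "x \<in> Y \<Longrightarrow> y \<in> Y \<Longrightarrow> Fp act 1 x = Fp act 1 y \<Longrightarrow> x = y"
  using Fp1_in[of x] unfolding Fp_def using pa2 by auto

lemma L2: "G \<in> UU Y act \<Longrightarrow> x \<in> Y \<Longrightarrow> lef m G (Fp act 1 x) \<Longrightarrow> \<exists>w\<in>Y. G = Fp act 1 w \<and> m w x = w"
proof -
  assume G: "G \<in> UU Y act" and x: "x \<in> Y" and le: "lef m G (Fp act 1 x)"
  obtain r v where G': "G = Fp act r v" "v \<in> Y" using G unfolding UU_def by blast
  obtain z where z: "(1,z) \<in> G" "m z x = z" using le Fp1_in[OF x] unfolding lef_def by blast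
  have a: "act r v = Some z" using z(1) G' unfolding Fp_def by simp
  then have "G = Fp act 1 z" using L1 G' by simp
  moreover have "z \<in> Y" using pa1 a G' by blast
  ultimately show ?thesis using z by blast
qed

lemma L3: "x \<in> Y \<Longrightarrow> y \<in> Y \<Longrightarrow> m x y = x \<Longrightarrow> lef m (Fp act 1 x) (Fp act 1 y)"
  unfolding lef_def Fp_def using op by auto

lemma kap_X: "y \<in> Y \<Longrightarrow> kap Y act m y \<in> XX Y act m"
  unfolding kap_def XX_def using le_trans Fp1_U by blast

lemma kap_meet: "x \<in> Y \<Longrightarrow> y \<in> Y \<Longrightarrow> kap Y act m (m x y) = kap Y act m x \<inter> kap Y act m y"
proof
  assume x: "x \<in> Y" and y: "y \<in> Y"
  have mx: "m (m x y) x = m x y" by (metis asc cm idm x y cl)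
  have my: "m (m x y) y = m x y" by (metis asc idm x y)
  show "kap Y act m (m x y) \<subseteq> kap Y act m x \<inter> kap Y act m y"
  proof
    fix G assume "G \<in> kap Y act m (m x y)"
    then have G: "G \<in> UU Y act" "lef m G (Fp act 1 (m x y))" unfolding kap_def by auto
    have "lef m G (Fp act 1 x)" using le_trans[OF G(1) Fp1_U Fp1_U G(2) L3] mx cl x y by blast
    moreover have "lef m G (Fp act 1 y)" using le_trans[OF G(1) Fp1_U Fp1_U G(2) L3] my cl x y by blast
    ultimately show "G \<in> kap Y act m x \<inter> kap Y act m y" unfolding kap_def using G by simp
  qed
  show "kap Y act m x \<inter> kap Y act m y \<subseteq> kap Y act m (m x y)"
  proof
    fix G assume "G \<in> kap Y act m x \<inter> kap Y act m y"
    then have G: "G \<in> UU Y act" "lef m G (Fp act 1 x)" "lef m G (Fp act 1 y)" unfolding kap_def by auto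
    obtain w where w: "w \<in> Y" "G = Fp act 1 w" "m w x = w" using L2 G x by blast
    obtain w' where w': "w' \<in> Y" "G = Fp act 1 w'" "m w' y = w'" using L2 G y by blast
    have "w = w'" using Fp_inj w w' by simp
    then have "m w (m x y) = w" using w w' by (metis asc x y)
    then have "lef m G (Fp act 1 (m x y))" using L3 w cl x y by simp
    then show "G \<in> kap Y act m (m x y)" unfolding kap_def using G by simp
  qed
qed

lemma L4: "y \<in> Y \<Longrightarrow> gac Y act m t (kap Y act m y) = {G \<in> UU Y act. lef m G (Fp act t y)}"
proof
  assume y: "y \<in> Y"
  show "gac Y act m t (kap Y act m y) \<subseteq> {G \<in> UU Y act. lef m G (Fp act t y)}"
  proof
    fix G assume "G \<in> gac Y act m t (kap Y act m y)"
    then obtain H where H: "G \<in> UU Y act" "H \<in> UU Y act" "lef m H (Fp act 1 y)" "lef m G (sh t H)"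
      unfolding gac_def kap_def by auto
    have "lef m (sh t H) (Fp act t y)" using sh_mono[OF H(3), of t] sh_Fp by simp
    then have "lef m G (Fp act t y)" using le_trans H sh_U Fp1_U y by blast
    then show "G \<in> {G \<in> UU Y act. lef m G (Fp act t y)}" using H by simp
  qed
  show "{G \<in> UU Y act. lef m G (Fp act t y)} \<subseteq> gac Y act m t (kap Y act m y)"
  proof
    fix G assume G: "G \<in> {G \<in> UU Y act. lef m G (Fp act t y)}"
    have "Fp act 1 y \<in> kap Y act m y" unfolding kap_def using Fp1_U le_refl y by blast
    moreover have "sh t (Fp act 1 y) = Fp act t y" using sh_Fp by simp
    ultimately show "G \<in> gac Y act m t (kap Y act m y)" unfolding gac_def using G
      by (intro CollectI conjI bexI[of _ "Fp act 1 y"]) auto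
  qed
qed

lemma main: "\<exists>(\<kappa> :: 'a \<Rightarrow> ('t \<times> 'a) set set) (X :: ('t \<times> 'a) set set set) n gact.
           globalisation Y act \<kappa> X gact \<and>
           semilattice_with_identity X n \<and>
           semilattice_morphism Y m X n \<kappa> \<and> inj_on \<kappa> Y \<and>
           order_preserving_action X n gact"
proof (intro exI conjI)
  let ?k = "kap Y act m" and ?X = "XX Y act m" and ?g = "gac Y act m"
  have inj: "inj_on ?k Y"
  proof (rule inj_onI)
    fix x y assume x: "x \<in> Y" and y: "y \<in> Y" and e: "?k x = ?k y"
    have "Fp act 1 x \<in> ?k x" "Fp act 1 y \<in> ?k y" unfolding kap_def using Fp1_U le_refl x y by auto
    then have "lef m (Fp act 1 x) (Fp act 1 y)" "lef m (Fp act 1 y) (Fp act 1 x)"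
      using e unfolding kap_def by auto
    then have "Fp act 1 x = Fp act 1 y" using le_antisym Fp1_U x y by blast
    then show "x = y" using Fp_inj x y by blast
  qed
  show "inj_on ?k Y" by (rule inj)
  have ma: "monoid_action ?X ?g"
    unfolding monoid_action_def
  proof (intro conjI allI ballI)
    fix t D assume D: "D \<in> ?X"
    show "?g t D \<in> ?X" unfolding XX_def gac_def
      using D le_trans sh_U unfolding XX_def by blast
  next
    fix D assume D: "D \<in> ?X"
    show "?g 1 D = D" unfolding gac_def sh_one
      using D le_refl unfolding XX_def by blast
  next
    fix s t D assume D: "D \<in> ?X"
    show "?g (s*t) D = ?g s (?g t D)"
    proof
      show "?g (s*t) D \<subseteq> ?g s (?g t D)"
      proof
        fix G assume "G \<in> ?g (s*t) D"
        then obtain H where H: "G \<in> UU Y act" "H \<in> D" "lef m G (sh s (sh t H))"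
          unfolding gac_def sh_comp by auto
        have HU: "H \<in> UU Y act" using H D unfolding XX_def by auto
        have "sh t H \<in> ?g t D" unfolding gac_def using H HU sh_U le_refl by blast
        then show "G \<in> ?g s (?g t D)" unfolding gac_def using H by blast
      qed
      show "?g s (?g t D) \<subseteq> ?g (s*t) D"
      proof
        fix G assume "G \<in> ?g s (?g t D)"
        then obtain K H where KH: "G \<in> UU Y act" "K \<in> UU Y act" "H \<in> D" "lef m K (sh t H)" "lef m G (sh s K)"
          unfolding gac_def by auto
        have HU: "H \<in> UU Y act" using KH D unfolding XX_def by auto
        have "lef m (sh s K) (sh s (sh t H))" using sh_mono KH by blast
        then have "lef m G (sh s (sh t H))" using le_trans KH HU sh_U by blast
        then show "G \<in> ?g (s*t) D" unfolding gac_def sh_comp using KH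
          by (metis (no_types, lifting) mem_Collect_eq sh_comp)
      qed
    qed
  qed
  show "globalisation Y act ?k ?X ?g"
    unfolding globalisation_def
  proof (intro conjI allI ballI)
    show "inj_on ?k Y" by (rule inj)
    show "?k ` Y \<subseteq> ?X" using kap_X by blast
    show "monoid_action ?X ?g" by (rule ma)
  next
    fix t x assume x: "x \<in> Y"
    show "(act t x \<noteq> None) = (?g t (?k x) \<in> ?k ` Y)"
    proof
      assume "act t x \<noteq> None"
      then obtain z where z: "act t x = Some z" by auto
      have "?g t (?k x) = ?k z" using L4[OF x] L1[OF x z] unfolding kap_def by simp
      then show "?g t (?k x) \<in> ?k ` Y" using pa1 x z by blast
    next
      assume "?g t (?k x) \<in> ?k ` Y"
      then obtain z where z: "z \<in> Y" "{G \<in> UU Y act. lef m G (Fp act t x)} = ?k z"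
        using L4[OF x] by auto
      have "Fp act t x \<in> ?k z" using z(2) Fp1_U x le_refl by blast
      moreover have "Fp act 1 z \<in> {G \<in> UU Y act. lef m G (Fp act t x)}"
        using z Fp1_U le_refl unfolding kap_def by blast
      ultimately have "Fp act t x = Fp act 1 z" using le_antisym Fp1_U x z unfolding kap_def by blast
      then have "(1,z) \<in> Fp act t x" using Fp1_in z by simp
      then show "act t x \<noteq> None" unfolding Fp_def by auto
    qed
  next
    fix t x y assume x: "x \<in> Y"
    show "act t x = Some y \<longrightarrow> ?k y = ?g t (?k x)"
      using L4[OF x] L1[OF x] unfolding kap_def by simp
  qed
  show "semilattice_with_identity ?X (\<inter>)"
    unfolding semilattice_with_identity_def semilattice_on_def
  proof (intro conjI ballI)
    show "\<exists>e\<in>?X. \<forall>x\<in>?X. e \<inter> x = x \<and> x \<inter> e = x"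
      by (rule bexI[of _ "UU Y act"]) (auto simp: XX_def)
  qed (auto simp: XX_def)
  show "semilattice_morphism Y m ?X (\<inter>) ?k"
    unfolding semilattice_morphism_def using kap_X kap_meet by blast
  show "order_preserving_action ?X (\<inter>) ?g"
    unfolding order_preserving_action_def sl_le_def
  proof (intro conjI allI ballI impI)
    show "monoid_action ?X ?g" by (rule ma)
  next
    fix t and x y :: "('t \<times> 'a) set set" assume "x \<inter> y = x"
    then show "?g t x \<inter> ?g t y = ?g t x" unfolding gac_def by blast
  qed
qed

end

theorem mainTheorem5:
  fixes Y :: "'a set" and m :: "'a \<Rightarrow> 'a \<Rightarrow> 'a"
    and act :: "'t::monoid_mult \<Rightarrow> 'a \<Rightarrow> 'a option"
  assumes "semilattice_on Y m"
    and "strong_partial_action Y act"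
    and "order_preserving_partial_action Y m act"
  shows "\<exists>(\<kappa> :: 'a \<Rightarrow> ('t \<times> 'a) set set) (X :: ('t \<times> 'a) set set set) n gact.
           globalisation Y act \<kappa> X gact \<and>
           semilattice_with_identity X n \<and>
           semilattice_morphism Y m X n \<kappa> \<and> inj_on \<kappa> Y \<and>
           order_preserving_action X n gact"
  using main[OF assms] .

end
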